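(* Let $f$ be a real entire function of genus $1$ with only negative zeros and with $f(0)>0$. For $s>0$ the function $$h(x)=(\log f)'(x)-(\log f)'(x+s),\qquad x>0,$$ is a generalized Stieltjes function of order $2$.
   Context: A generalized Stieltjes function of order $2$ is a function $F(x)=\int_0^\infty\frac{d\mu(t)}{(x+t)^2}+c$ on $(0,\infty)$ with $\mu$ a positive measure on $[0,\infty)$ making the integral converge and $c\geq0$. *)

theory Defs
  imports "HOL-Complex_Analysis.Complex_Analysis" "HOL-Computational_Algebra.Polynomial"
begin

text \<open>Genus of an entire function via its Hadamard/Weierstrass representation
  f(z) = z^m e^{Q(z)} prod_n E_p(z / a_n), where the zeros a_n are encoded by their
  reciprocals w n = 1 / a_n (w n = 0 encodes "no zero", allowing finitely many zeros),
  p is the least natural number with sum |a_n|^-(p+1) < infinity, Q a polynomial,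
  and the genus is max p (deg Q).\<close>

definition has_genus :: "(complex \<Rightarrow> complex) \<Rightarrow> nat \<Rightarrow> bool" where
  "has_genus f g \<longleftrightarrow>
     (\<exists>(m::nat) (Q::complex poly) (w::nat \<Rightarrow> complex) (p::nat).
        summable (\<lambda>n. norm (w n) ^ (p + 1)) \<and>
        (\<forall>q<p. \<not> summable (\<lambda>n. norm (w n) ^ (q + 1))) \<and>
        (\<forall>z. f z = z ^ m * exp (poly Q z) * (\<Prod>n. weierstrass_factor p (z * w n))) \<and>
        g = max p (degree Q))"

definition real_entire :: "(complex \<Rightarrow> complex) \<Rightarrow> bool" where
  "real_entire f \<longleftrightarrow> f holomorphic_on UNIV \<and> (\<forall>x::real. f (of_real x) \<in> \<real>)"

definition gen_stieltjes2 :: "(real \<Rightarrow> real) \<Rightarrow> bool" where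
  "gen_stieltjes2 F \<longleftrightarrow>
     (\<exists>(\<mu>::real measure) (c::real).
        sets \<mu> = sets borel \<and> emeasure \<mu> {..<0} = 0 \<and> c \<ge> 0 \<and>
        (\<forall>x>0. integrable \<mu> (\<lambda>t. 1 / (x + t) ^ 2) \<and>
               F x = (\<integral>t. 1 / (x + t) ^ 2 \<partial>\<mu>) + c))"

end

theory Submission
  imports Defs
begin

lemma wf_bound:
  assumes "norm z \<le> R" "norm w * (2*R) \<le> 1"
  shows "norm (weierstrass_factor p (z * w) - 1) \<le> 3 * (R^(p+1) * norm w ^(p+1))"
proof -
  have R: "R \<ge> 0" using assms(1) norm_ge_zero order_trans by blast
  have "norm (z*w) \<le> R * norm w" using assms(1) by (simp add: norm_mult mult_right_mono)
  also have "\<dots> \<le> 1/2" using assms(2) by (simp add: field_simps)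
  finally have h: "norm (z*w) \<le> 1/2" .
  have "norm (weierstrass_factor p (z * w) - 1) \<le> 3 * norm (z*w) ^ Suc p"
    by (rule weierstrass_factor_bound[OF h])
  also have "\<dots> \<le> 3 * (R * norm w) ^ Suc p"
    using \<open>norm (z*w) \<le> R * norm w\<close> by (intro mult_left_mono power_mono) auto
  finally show ?thesis by (simp add: power_mult_distrib mult_ac)
qed

lemma w_event:
  fixes w :: "nat \<Rightarrow> complex"
  assumes sw: "summable (\<lambda>n. norm (w n) ^ (p+1))" and R: "R > 0"
  shows "eventually (\<lambda>n. norm (w n) * (2*R) \<le> 1) sequentially"
proof -
  have "(\<lambda>n. norm (w n) ^ (p+1)) \<longlonglongrightarrow> 0" using summable_LIMSEQ_zero[OF sw] .
  moreover have "(1/(2*R))^(p+1) > 0" using R by simp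
  ultimately have "eventually (\<lambda>n. norm (w n) ^ (p+1) < (1/(2*R))^(p+1)) sequentially"
    by (rule order_tendstoD(2))
  then show ?thesis
  proof (rule eventually_mono)
    fix n assume "norm (w n) ^ (p+1) < (1/(2*R))^(p+1)"
    then have "norm (w n) < 1/(2*R)" by (rule power_less_imp_less_base) (use R in simp)
    then show "norm (w n) * (2*R) \<le> 1" using R by (simp add: field_simps)
  qed
qed

lemma wprod_has_prod:
  fixes w :: "nat \<Rightarrow> complex"
  assumes sw: "summable (\<lambda>n. norm (w n) ^ (p+1))"
  shows "(\<lambda>n. weierstrass_factor p (z * w n)) has_prod (\<Prod>n. weierstrass_factor p (z * w n))"
proof -
  define R where "R = norm z + 1"
  have R: "R > 0" "norm z \<le> R" unfolding R_def by (auto intro: add_nonneg_pos)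
  have "abs_convergent_prod (\<lambda>n. weierstrass_factor p (z * w n))"
    unfolding abs_convergent_prod_conv_summable
  proof (rule summable_comparison_test_ev)
    show "eventually (\<lambda>n. norm (norm (weierstrass_factor p (z * w n) - 1)) \<le> 3 * (R^(p+1) * norm (w n) ^(p+1))) sequentially"
      using w_event[OF sw R(1)]
    proof eventually_elim
      case (elim n)
      from wf_bound[OF R(2) elim, of p] show ?case by simp
    qed
    show "summable (\<lambda>n. 3 * (R^(p+1) * norm (w n) ^(p+1)))"
      by (intro summable_mult sw)
  qed
  then have "convergent_prod (\<lambda>n. weierstrass_factor p (z * w n))"
    using abs_convergent_prod_imp_convergent_prod by blast
  then show ?thesis by (simp add: convergent_prod_has_prod)
qed

lemma wprod_uniform:
  fixes w :: "nat \<Rightarrow> complex"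
  assumes sw: "summable (\<lambda>n. norm (w n) ^ (p+1))" and R: "R > 0"
  shows "uniform_limit (cball 0 R) (\<lambda>N z. \<Prod>n<N. weierstrass_factor p (z * w n))
           (\<lambda>z. \<Prod>n. weierstrass_factor p (z * w n)) sequentially"
proof -
  have "uniformly_convergent_on (cball 0 R) (\<lambda>N z. \<Prod>n<N. weierstrass_factor p (z * w n))"
  proof (rule uniformly_convergent_on_prod')
    show "uniformly_convergent_on (cball 0 R) (\<lambda>N z. \<Sum>n<N. norm (weierstrass_factor p (z * w n) - 1))"
    proof (rule Weierstrass_m_test'_ev)
      show "\<forall>\<^sub>F n in sequentially. \<forall>z\<in>cball 0 R. norm (norm (weierstrass_factor p (z * w n) - 1)) \<le> 3 * (R^(p+1) * norm (w n) ^(p+1))"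
        using w_event[OF sw R]
      proof eventually_elim
        case (elim n)
        show ?case
        proof
          fix z :: complex assume "z \<in> cball 0 R"
          then have "norm z \<le> R" by simp
          from wf_bound[OF this elim, of p] show "norm (norm (weierstrass_factor p (z * w n) - 1)) \<le> 3 * (R^(p+1) * norm (w n) ^(p+1))" by simp
        qed
      qed
      show "summable (\<lambda>n. 3 * (R^(p+1) * norm (w n) ^(p+1)))"
        by (intro summable_mult sw)
    qed
  next
    show "compact (cball (0::complex) R)" by simp
  next
    fix n show "continuous_on (cball 0 R) (\<lambda>z. weierstrass_factor p (z * w n))" by (intro continuous_intros)
  qed
  then obtain g where g: "uniform_limit (cball 0 R) (\<lambda>N z. \<Prod>n<N. weierstrass_factor p (z * w n)) g sequentially"
    by (auto simp: uniformly_convergent_on_def)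
  have gz: "g z = (\<Prod>n. weierstrass_factor p (z * w n))" if z: "z \<in> cball 0 R" for z
  proof -
    have "(\<lambda>N. \<Prod>n<N. weierstrass_factor p (z * w n)) \<longlonglongrightarrow> g z"
      using tendsto_uniform_limitI[OF g z] .
    hence "(\<lambda>N. \<Prod>n<Suc N. weierstrass_factor p (z * w n)) \<longlonglongrightarrow> g z"
      by (rule LIMSEQ_Suc)
    moreover have "(\<lambda>N. \<Prod>n<Suc N. weierstrass_factor p (z * w n)) \<longlonglongrightarrow> (\<Prod>n. weierstrass_factor p (z * w n))"
      using convergent_prod_LIMSEQ[OF wprod_has_prod[OF sw, of z, unfolded has_prod_iff, THEN conjunct1]] 
      unfolding lessThan_Suc_atMost .
    ultimately show ?thesis using LIMSEQ_unique by blast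
  qed
  have "uniform_limit (cball 0 R) (\<lambda>N z. \<Prod>n<N. weierstrass_factor p (z * w n)) g sequentially
    \<longleftrightarrow> uniform_limit (cball 0 R) (\<lambda>N z. \<Prod>n<N. weierstrass_factor p (z * w n)) (\<lambda>z. \<Prod>n. weierstrass_factor p (z * w n)) sequentially"
    by (rule uniform_limit_cong') (simp_all add: gz)
  from iffD1[OF this g] show ?thesis .
qed


lemma interval_piece:
  fixes x a s :: real
  assumes x: "x > 0" and a: "a > 0" and s: "s > 0"
  shows "(\<integral>\<^sup>+t. ennreal (1 / (x + t)^2) * indicator {a .. a + s} t \<partial>lborel)
           = ennreal (1/(x+a) - 1/(x+a+s))"
proof -
  have "(\<integral>\<^sup>+t. ennreal (1 / (x + t)^2) * indicator {a .. a + s} t \<partial>lborel)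
        = ennreal ((\<lambda>u. - 1/(x+u)) (a+s) - (\<lambda>u. - 1/(x+u)) a)"
  proof (rule nn_integral_FTC_Icc)
    show "(\<lambda>t. 1 / (x + t)^2) \<in> borel_measurable borel" by measurable
    fix u assume u: "u \<in> {a..a+s}"
    then have "x + u > 0" using x a by auto
    then show "((\<lambda>u. - 1/(x+u)) has_real_derivative 1 / (x + u)^2) (at u)"
      by (auto intro!: derivative_eq_intros simp: power2_eq_square field_simps)
    show "0 \<le> 1 / (x + u)^2" by simp
  qed (use s in auto)
  then show ?thesis by (simp add: add_ac)
qed

lemma measure_part:
  fixes r :: "nat \<Rightarrow> real" and h :: "real \<Rightarrow> real" and s :: real
  assumes s: "s > 0" and r: "\<And>n. r n \<ge> 0"
    and H: "\<And>x. x > 0 \<Longrightarrow> (\<lambda>n. r n / (1 + x * r n) - r n / (1 + (x + s) * r n)) sums h x"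
  shows "gen_stieltjes2 h"
proof -
  define g :: "real \<Rightarrow> ennreal" where
    "g u = (\<Sum>n. (if r n > 0 then indicator {1 / r n .. 1 / r n + s} u else 0))" for u
  have gm: "g \<in> borel_measurable borel" unfolding g_def by measurable
  define \<mu> where "\<mu> = density lborel g"
  have sets: "sets \<mu> = sets borel" by (simp add: \<mu>_def)
  have g0: "g u = 0" if "u < 0" for u
  proof -
    have "(if r n > 0 then indicator {1 / r n .. 1 / r n + s} u else 0) = (0::ennreal)" for n
      using that by (auto simp: indicator_def) (smt (verit) divide_pos_pos)
    then show ?thesis unfolding g_def by simp
  qed
  have neg: "emeasure \<mu> {..<0} = 0"
  proof -
    have "(\<lambda>x. g x * indicator {..<0} x) = (\<lambda>_. 0)"
    proof (rule ext)
      fix x :: real show "g x * indicator {..<0} x = 0" by (cases "x < 0") (simp_all add: g0)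
    qed
    then show ?thesis unfolding \<mu>_def using gm by (subst emeasure_density) auto
  qed
  have d_nonneg: "r n / (1 + x * r n) - r n / (1 + (x + s) * r n) \<ge> 0" if "x > 0" for x n
  proof -
    have "r n / (1 + (x + s) * r n) \<le> r n / (1 + x * r n)"
    proof (rule divide_left_mono)
      have a: "1 + x * r n \<ge> 1" using r[of n] that by simp
      have b: "x * r n \<le> (x + s) * r n" using r[of n] s by (intro mult_right_mono) auto
      then show "1 + x * r n \<le> 1 + (x + s) * r n" by simp
      show "0 \<le> r n" by (rule r)
      show "0 < (1 + (x + s) * r n) * (1 + x * r n)" using a b by (intro mult_pos_pos) auto
    qed
    then show ?thesis by simp
  qed
  have main: "(\<integral>\<^sup>+t. ennreal (1 / (x + t)^2) \<partial>\<mu>) = ennreal (h x)" if x: "x > 0" for x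
  proof -
    have "(\<integral>\<^sup>+t. ennreal (1 / (x + t)^2) \<partial>\<mu>) = (\<integral>\<^sup>+t. g t * ennreal (1 / (x + t)^2) \<partial>lborel)"
    proof -
      have m2: "(\<lambda>t. ennreal (1 / (x + t)^2)) \<in> borel_measurable lborel" by measurable
      show ?thesis unfolding \<mu>_def by (rule nn_integral_density[OF _ m2]) (simp add: gm)
    qed
    also have "\<dots> = (\<integral>\<^sup>+t. (\<Sum>n. (if r n > 0 then ennreal (1 / (x + t)^2) * indicator {1 / r n .. 1 / r n + s} t else 0)) \<partial>lborel)"
      unfolding g_def
      apply (intro nn_integral_cong)
      apply (simp only: ennreal_suminf_multc[symmetric])
      apply (intro suminf_cong)
      by (simp add: mult.commute)
    also have "\<dots> = (\<Sum>n. (\<integral>\<^sup>+t. (if r n > 0 then ennreal (1 / (x + t)^2) * indicator {1 / r n .. 1 / r n + s} t else 0) \<partial>lborel))"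
      by (rule nn_integral_suminf) measurable
    also have "\<dots> = (\<Sum>n. ennreal (r n / (1 + x * r n) - r n / (1 + (x + s) * r n)))"
    proof (intro suminf_cong)
      fix n
      show "(\<integral>\<^sup>+t. (if r n > 0 then ennreal (1 / (x + t)^2) * indicator {1 / r n .. 1 / r n + s} t else 0) \<partial>lborel)
         = ennreal (r n / (1 + x * r n) - r n / (1 + (x + s) * r n))"
      proof (cases "r n > 0")
        case True
        have "(\<integral>\<^sup>+t. (if r n > 0 then ennreal (1 / (x + t)^2) * indicator {1 / r n .. 1 / r n + s} t else 0) \<partial>lborel)
             = ennreal (1/(x+1/r n) - 1/(x+1/r n+s))"
          using True by (simp add: interval_piece x s)
        also have "1/(x+1/r n) - 1/(x+1/r n+s) = r n / (1 + x * r n) - r n / (1 + (x + s) * r n)"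
          using True x s by (simp add: field_simps)
        finally show ?thesis .
      next
        case False
        then have "r n = 0" using r[of n] by linarith
        then show ?thesis by simp
      qed
    qed
    also have "\<dots> = ennreal (\<Sum>n. r n / (1 + x * r n) - r n / (1 + (x + s) * r n))"
      using H[OF x] d_nonneg[OF x] by (intro suminf_ennreal2) (auto simp: sums_iff)
    also have "(\<Sum>n. r n / (1 + x * r n) - r n / (1 + (x + s) * r n)) = h x"
      using H[OF x] by (simp add: sums_iff)
    finally show ?thesis .
  qed
  have hpos: "h x \<ge> 0" if "x > 0" for x
    using H[OF that] d_nonneg[OF that] by (intro sums_le[OF _ sums_zero H[OF that]]) auto
  show ?thesis unfolding gen_stieltjes2_def
  proof (intro exI[of _ \<mu>] exI[of _ 0] conjI allI impI)
    fix x :: real assume x: "x > 0"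
    have meas: "(\<lambda>t. 1 / (x + t)^2) \<in> borel_measurable \<mu>"
      by (simp add: measurable_cong_sets[OF sets refl]) 
    show "integrable \<mu> (\<lambda>t. 1 / (x + t)^2)"
      by (rule integrableI_nonneg[OF meas]) (auto simp: main[OF x])
    have "(\<integral>t. 1 / (x + t)^2 \<partial>\<mu>) = enn2real (\<integral>\<^sup>+t. ennreal (1 / (x + t)^2) \<partial>\<mu>)"
      by (rule integral_eq_nn_integral[OF meas]) auto
    also have "\<dots> = h x" using main[OF x] hpos[OF x] by simp
    finally show "h x = (\<integral>t. 1 / (x + t)^2 \<partial>\<mu>) + 0" by simp
  qed (use sets neg in auto)
qed


definition LD :: "nat \<Rightarrow> complex \<Rightarrow> complex \<Rightarrow> complex" where
  "LD p w z = w * (- 1 / (1 - z * w) + (if p = 0 then 0 else 1))"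

lemma wf_deriv:
  assumes "p \<le> 1" "z * w \<noteq> 1"
  shows "((\<lambda>z. weierstrass_factor p (z * w)) has_field_derivative
            weierstrass_factor p (z * w) * LD p w z) (at z)"
proof -
  have nz: "1 - z * w \<noteq> 0" using assms by simp
  show ?thesis
  proof (cases "p = 0")
    case True
    have e: "(\<lambda>z. weierstrass_factor p (z * w)) = (\<lambda>z. 1 - z * w)"
      by (simp add: True weierstrass_factor_def)
    show ?thesis unfolding e
      by (rule derivative_eq_intros refl)+ (use nz in \<open>simp add: True LD_def weierstrass_factor_def field_simps\<close>)
  next
    case False
    then have p1: "p = 1" using assms by simp
    have e: "(\<lambda>z. weierstrass_factor p (z * w)) = (\<lambda>z. (1 - z * w) * exp (z * w))"
      by (simp add: p1 weierstrass_factor_def)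
    show ?thesis unfolding e
      by (rule derivative_eq_intros refl)+ (use nz in \<open>simp add: p1 LD_def weierstrass_factor_def field_simps\<close>)
  qed
qed

lemma prod_deriv:
  fixes N :: nat
  assumes "p \<le> 1" "\<And>n. z * w n \<noteq> 1"
  shows "((\<lambda>z. \<Prod>n<N. weierstrass_factor p (z * w n)) has_field_derivative
           (\<Prod>n<N. weierstrass_factor p (z * w n)) * (\<Sum>n<N. LD p (w n) z)) (at z)"
proof (induction N)
  case 0
  show ?case by simp
next
  case (Suc N)
  show ?case unfolding prod.lessThan_Suc sum.lessThan_Suc
    by (rule DERIV_cong[OF DERIV_mult[OF Suc.IH wf_deriv[OF assms(1) assms(2)]]]) (simp add: algebra_simps)
qed


theorem corollary4p10:
  fixes f :: "complex \<Rightarrow> complex" and s :: real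
  assumes "real_entire f"
    and "has_genus f 1"
    and "\<forall>z. f z = 0 \<longrightarrow> z \<in> \<real> \<and> Re z < 0"
    and "Re (f 0) > 0"
    and "s > 0"
  shows "gen_stieltjes2 (\<lambda>x. Re (deriv f (of_real x) / f (of_real x)
                               - deriv f (of_real (x + s)) / f (of_real (x + s))))"
proof -
  from assms(2) obtain m Q w p where sw: "summable (\<lambda>n. norm (w n) ^ (p+1))"
     and fe: "\<forall>z. f z = z ^ m * exp (poly Q z) * (\<Prod>n. weierstrass_factor p (z * w n))"
     and g1: "1 = max p (degree Q)"
    unfolding has_genus_def by blast
  define F where "F = (\<lambda>z. \<Prod>n. weierstrass_factor p (z * w n))"
  define P where "P = (\<lambda>N z. \<Prod>n<N. weierstrass_factor p (z * w n))"
  have p1: "p \<le> 1" and dQ: "degree Q \<le> 1" using g1 by auto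
  have m0: "m = 0"
  proof (rule ccontr)
    assume "m \<noteq> 0"
    then have "f 0 = 0" using fe by (simp add: power_0_left)
    with assms(4) show False by simp
  qed
  have fF: "f = (\<lambda>z. exp (poly Q z) * F z)" using fe m0 by (auto simp: F_def)
  have hp: "(\<lambda>n. weierstrass_factor p (z * w n)) has_prod F z" for z
    unfolding F_def by (rule wprod_has_prod[OF sw])
  have wneg: "w n \<in> \<real> \<and> Re (w n) \<le> 0" for n
  proof (cases "w n = 0")
    case True then show ?thesis by simp
  next
    case False
    define z0 where "z0 = 1 / w n"
    have "weierstrass_factor p (z0 * w n) = 0" using False by (simp add: z0_def)
    then have "0 \<in> range (\<lambda>n. weierstrass_factor p (z0 * w n))" by (metis rangeI)
    then have "F z0 = 0" using has_prod_eq_0_iff[OF hp[of z0]] by blast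
    then have "f z0 = 0" by (simp add: fF)
    then have z0: "z0 \<in> \<real> \<and> Re z0 < 0" using assms(3) by blast
    then obtain y where y: "z0 = of_real y" by (metis Reals_cases)
    with z0 have "y < 0" by simp
    have yn: "complex_of_real y \<noteq> 0" using \<open>y < 0\<close> by simp
    have "w n = 1 / z0" using False by (simp add: z0_def)
    then have "w n = of_real (1/y)" using y yn by simp
    then show ?thesis using \<open>y < 0\<close> by simp
  qed
  define r where "r n = - Re (w n)" for n
  have wr: "w n = of_real (- r n)" for n
    using wneg[of n] by (simp add: r_def complex_eq_iff complex_is_Real_iff)
  have r0: "r n \<ge> 0" for n using wneg[of n] by (simp add: r_def)
  have nz1: "of_real x * w n \<noteq> 1" if "x > 0" for x n
  proof -
    have "of_real x * w n = of_real (- (x * r n))" by (simp add: wr)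
    moreover have "- (x * r n) \<noteq> 1" using that r0[of n] by (smt (verit) mult_nonneg_nonneg)
    ultimately show ?thesis by (metis of_real_eq_1_iff)
  qed
  have Fnz: "F (of_real x) \<noteq> 0" if "x > 0" for x
  proof
    assume "F (of_real x) = 0"
    then have "f (of_real x) = 0" by (simp add: fF)
    then have "Re (of_real x) < 0" using assms(3) by blast
    with that show False by simp
  qed
  have ul: "uniform_limit (cball 0 R) P F sequentially" if "R > 0" for R
    unfolding P_def F_def by (rule wprod_uniform[OF sw that])
  have holP: "P N holomorphic_on UNIV" for N
    unfolding P_def by (intro holomorphic_intros)
  obtain G' where G'1: "\<And>z. (F has_field_derivative G' z) (at z)"
    and G'2: "\<And>z. (\<lambda>N. deriv (P N) z) \<longlonglongrightarrow> G' z"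
  proof -
    have "\<exists>g'. \<forall>x\<in>UNIV. (F has_field_derivative g' x) (at x) \<and> ((\<lambda>n. deriv (P n) x) \<longlongrightarrow> g' x) sequentially"
    proof (rule has_complex_derivative_uniform_sequence)
      show "open (UNIV::complex set)" by simp
    next
      fix n and x :: complex
      show "(P n has_field_derivative deriv (P n) x) (at x)"
        using holP by (intro holomorphic_derivI[of _ UNIV]) auto
    next
      fix x :: complex
      have "cball x 1 \<subseteq> cball 0 (norm x + 1)"
        by (simp add: cball_subset_cball_iff dist_norm)
      moreover have "norm x + 1 > 0" by (smt (verit) norm_ge_zero)
      ultimately have "uniform_limit (cball x 1) P F sequentially"
        using uniform_limit_on_subset ul by blast
      then show "\<exists>d>0. cball x d \<subseteq> UNIV \<and> uniform_limit (cball x d) P F sequentially"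
        by (intro exI[of _ 1]) auto
    qed
    then show ?thesis using that by blast
  qed
  have LDlim: "(\<lambda>N. \<Sum>n<N. LD p (w n) (of_real x)) \<longlonglongrightarrow> G' (of_real x) / F (of_real x)"
    if x: "x > 0" for x
  proof -
    let ?z = "complex_of_real x"
    have PN: "P N ?z \<noteq> 0" for N
      unfolding P_def using nz1[OF x] by (simp add: prod_zero_iff)
    have "?z \<in> cball 0 (norm ?z + 1)" by simp
    from tendsto_uniform_limitI[OF ul this] have PF: "(\<lambda>N. P N ?z) \<longlonglongrightarrow> F ?z"
      by (simp add: add_nonneg_pos)
    have dP: "deriv (P N) ?z = P N ?z * (\<Sum>n<N. LD p (w n) ?z)" for N
      unfolding P_def by (rule DERIV_imp_deriv[OF prod_deriv[OF p1 nz1[OF x]]])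
    have eq: "(\<Sum>n<N. LD p (w n) ?z) = deriv (P N) ?z / P N ?z" for N
      using PN[of N] by (simp add: dP)
    have "(\<lambda>N. deriv (P N) ?z / P N ?z) \<longlonglongrightarrow> G' ?z / F ?z"
      by (intro tendsto_divide G'2 PF Fnz[OF x])
    then show ?thesis by (simp only: eq)
  qed
  define c where "c = coeff (pderiv Q) 0"
  have pc: "poly (pderiv Q) z = c" for z
  proof -
    have "degree (pderiv Q) = 0" using dQ by (simp add: degree_pderiv)
    then have "[:coeff (pderiv Q) 0:] = pderiv Q" by (rule degree_0_id)
    then have "pderiv Q = [:c:]" unfolding c_def by simp
    then show ?thesis by simp
  qed
  have df: "deriv f z = exp (poly Q z) * c * F z + exp (poly Q z) * G' z" for z
  proof -
    have "((\<lambda>z. exp (poly Q z) * F z) has_field_derivative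
           (exp (poly Q z) * poly (pderiv Q) z) * F z + G' z * exp (poly Q z)) (at z)"
      by (intro DERIV_mult G'1 DERIV_chain2[OF DERIV_exp] poly_DERIV)
    then have "(f has_field_derivative exp (poly Q z) * c * F z + exp (poly Q z) * G' z) (at z)"
      unfolding fF by (simp add: pc mult_ac)
    then show ?thesis by (rule DERIV_imp_deriv)
  qed
  have ldf: "deriv f (of_real x) / f (of_real x) = c + G' (of_real x) / F (of_real x)" if "x > 0" for x
  proof -
    have fx: "f z = exp (poly Q z) * F z" for z by (simp add: fF)
    show ?thesis using Fnz[OF that] by (simp add: df fx field_simps)
  qed
  have LDreal: "LD p (w n) (of_real y) = of_real (r n / (1 + y * r n) - (if p = 0 then 0 else r n))"
    if y: "y > 0" for y n
  proof -
    have pos: "1 + y * r n > 0" using y r0[of n] by (smt (verit) mult_nonneg_nonneg)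
    have "LD p (w n) (of_real y) = of_real (- r n * (- 1 / (1 + y * r n) + (if p = 0 then 0 else 1)))"
      by (simp add: LD_def wr)
    also have "- r n * (- 1 / (1 + y * r n) + (if p = 0 then 0 else 1)) = r n / (1 + y * r n) - (if p = 0 then 0 else r n)"
      using pos by (simp add: field_simps)
    finally show ?thesis .
  qed
  have H: "(\<lambda>n. r n / (1 + x * r n) - r n / (1 + (x + s) * r n)) sums
        (Re (deriv f (of_real x) / f (of_real x) - deriv f (of_real (x + s)) / f (of_real (x + s))))"
    if x: "x > 0" for x
  proof -
    have xs: "x + s > 0" using x assms(5) by simp
    have "(\<lambda>N. (\<Sum>n<N. LD p (w n) (of_real x)) - (\<Sum>n<N. LD p (w n) (of_real (x+s))))
          \<longlonglongrightarrow> G' (of_real x) / F (of_real x) - G' (of_real (x+s)) / F (of_real (x+s))"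
      by (intro tendsto_diff LDlim x xs)
    moreover have "(\<Sum>n<N. LD p (w n) (of_real x)) - (\<Sum>n<N. LD p (w n) (of_real (x+s)))
        = of_real (\<Sum>n<N. r n / (1 + x * r n) - r n / (1 + (x + s) * r n))" for N
    proof -
      have trm: "LD p (w n) (of_real x) - LD p (w n) (of_real (x+s)) = of_real (r n / (1 + x * r n) - r n / (1 + (x + s) * r n))" for n
        unfolding LDreal[OF x] LDreal[OF xs] by simp
      show ?thesis by (simp only: sum_subtractf[symmetric] trm of_real_sum)
    qed
    ultimately have "(\<lambda>N. complex_of_real (\<Sum>n<N. r n / (1 + x * r n) - r n / (1 + (x + s) * r n)))
          \<longlonglongrightarrow> G' (of_real x) / F (of_real x) - G' (of_real (x+s)) / F (of_real (x+s))"
      by simp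
    then have "(\<lambda>N. Re (complex_of_real (\<Sum>n<N. r n / (1 + x * r n) - r n / (1 + (x + s) * r n))))
          \<longlonglongrightarrow> Re (G' (of_real x) / F (of_real x) - G' (of_real (x+s)) / F (of_real (x+s)))"
      by (rule tendsto_Re)
    then show ?thesis unfolding sums_def using ldf[OF x] ldf[OF xs] by simp
  qed
  show ?thesis
    by (rule measure_part[OF assms(5) r0 H])
qed

end
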